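(* Consider the district heating network optimal control problem $\mathcal{OCP}_T(x_0)$ described in the context, where the functions $d$, $r$, $p$ are bounded on $[0,\infty)$. Suppose $\mathcal{OCP}_T(x_0)$ exhibits a time-varying exact turnpike with respect to some $\bar z\in Z^{1,1}([0,\infty),\mathrm{int}(\mathcal Z))$ (an infinite-horizon pair satisfying the dynamics and input constraints). If $\bar z$ is bounded, then $\mathcal{OCP}_T(x_0)$ is strictly dissipative with respect to $\bar z$, and this holds for every $\alpha$ of class $\mathcal K$.
   Context: Network model: $\mathcal{G}=(\mathcal{V},\mathcal{E})$ is a connected directed graph with vertices $\mathcal V=\{v_1,\dots,v_n\}$, $n\ge 2$; an edge $e=(u,v)$, $u\ne v$, is oriented in the direction of water flow and carries a constant mass flow $q_e>0$. Each vertex has a heat loss coefficient $\kappa_v>0$ (masses and heat capacity normalized to $1$, ambient temperature $0$). $A_L$ is the weighted flow Laplacian of $\mathcal G$ with weights $q_e$, and $A=-A_L-\mathrm{diag}([\kappa_v]_{v\in\mathcal V})$. There are $m$ producers $\mathcal P\subset\mathcal V$ and $w$ consumers $\mathcal D\subset\mathcal V\setminus\mathcal P$; $B\in\mathbb{R}^{n\times m}$ has $(B)_{ij}=1$ if $v_i$ is the $j$-th producer and $0$ otherwise, and $E\in\mathbb{R}^{n\times w}$ analogously for consumers. Dynamics: $\dot x=Ax+Bu+Ed(t)$, $x(0)=x_0\in\mathcal X_0$, $\mathcal X_0\subset\mathbb{R}^n$ compact. Inputs lie in the box $\mathcal U=\prod_{i=1}^m[(u_{\min})_i,(u_{\max})_i]\subset\mathbb{R}^m_{\ge0}$;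 $\mathcal Z=\mathbb{R}^n\times\mathcal U$. Stage cost $\ell(\tau,x,u)=\tfrac12x^\top Qx+u^\top Sx+x^\top r(\tau)+u^\top p(\tau)$ with $Q$ symmetric, $S\in\mathbb{R}^{m\times n}$, $r:[0,\infty)\to\mathbb{R}^n$, $p:[0,\infty)\to\mathbb{R}^m$. $\mathcal{OCP}_T(x_0)$: minimize $\int_0^T\ell(\tau,x(\tau),u(\tau))d\tau$ over $u\in L^1([0,T],\mathcal U)$ subject to the dynamics; optimal pairs are $z_T^\star(\cdot;x_0)=(x_T^\star,u_T^\star)$. $Z^{1,1}(I,\mathcal R_1\times\mathcal R_2)$ denotes pairs $(x,u)$ with $x\in W^{1,1}$, $u\in L^1$ on $I$. Strict dissipativity: with $\ell_{\bar z}(\tau,z)=\ell(\tau,z)-\ell(\tau,\bar z(\tau))$, $\mathcal{OCP}_T(x_0)$ is strictly dissipative with respect to $\bar z$ (for a given class-$\mathcal K$ function $\alpha$, i.e. continuous, monotonically increasing, $\alpha(0)=0$) if there exists a storage function $\mathcal S:\mathbb{R}\times\mathbb{R}^n\to\mathbb{R}_{\ge s}$, $s\ge0$, such that for all $x_0\in\mathcal X_0$, $T\ge0$ and along all optimal pairs: $\mathcal S(T,x_T^\star(T))-\mathcal S(0,x_0)\le\int_0^T\big(-\alpha(\|z_T^\star(\tau,x_0)-\bar z(\tau)\|)+\ell_{\bar z}(\tau,z_T^\star(\tau,x_0))\big)d\tau$. Exact turnpike: with $\Theta_T(\varepsilon)=\{\tau\in[0,T]:\|z_T^\star(\tau,x_0)-\bar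 z(\tau)\|>\varepsilon\}$, the problem exhibits a time-varying exact turnpike with respect to $\bar z$ if there is $\nu:[0,\infty)\to[0,\infty)$ such that for all $x_0\in\mathcal X_0$, all $T>0$ and all optimal $u_T^\star$, $\mu(\Theta_T(\varepsilon))\le\nu(\varepsilon)<\infty$ for all $\varepsilon\ge0$, in particular for $\varepsilon=0$ ($\mu$ Lebesgue measure). *)

theory Defs
  imports "HOL-Analysis.Analysis"
begin

text \<open>Vertices are indexed by the finite type 'n, producers by 'm, consumers by 'w.
  The flow network is encoded by q u v = mass flow on edge (u,v) (q u v > 0 iff (u,v) is an edge).\<close>

definition flow_edges :: "('n \<Rightarrow> 'n \<Rightarrow> real) \<Rightarrow> ('n \<times> 'n) set" where
  "flow_edges q = {(u, v). 0 < q u v}"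

text \<open>Weighted flow Laplacian: row v collects the in-flowing edges (u,v), so that
  (- A_L x)_v = sum over edges (u,v) of q_(u,v) (x_u - x_v).\<close>
definition flow_laplacian :: "('n::finite \<Rightarrow> 'n \<Rightarrow> real) \<Rightarrow> real^'n^'n" where
  "flow_laplacian q = (\<chi> i j. if i = j then (\<Sum>k\<in>UNIV. q k i) else - q j i)"

definition sys_matrix :: "('n::finite \<Rightarrow> 'n \<Rightarrow> real) \<Rightarrow> ('n \<Rightarrow> real) \<Rightarrow> real^'n^'n" where
  "sys_matrix q \<kappa> = - flow_laplacian q - (\<chi> i j. if i = j then \<kappa> i else 0)"

definition selection_matrix :: "('m::finite \<Rightarrow> 'n::finite) \<Rightarrow> real^'m^'n" where
  "selection_matrix f = (\<chi> i j. if f j = i then 1 else 0)"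

definition stage_cost ::
  "real^'n^'n \<Rightarrow> real^'n^'m \<Rightarrow> (real \<Rightarrow> real^'n) \<Rightarrow> (real \<Rightarrow> real^'m)
   \<Rightarrow> real \<Rightarrow> real^'n \<Rightarrow> real^'m \<Rightarrow> real" where
  "stage_cost Q S r p \<tau> x u =
     (1/2) * (x \<bullet> (Q *v x)) + u \<bullet> (S *v x) + x \<bullet> r \<tau> + u \<bullet> p \<tau>"

definition admissible_pair ::
  "real^'n::finite^'n \<Rightarrow> real^'m::finite^'n \<Rightarrow> real^'w::finite^'n \<Rightarrow> (real \<Rightarrow> real^'w)
   \<Rightarrow> (real^'m) set \<Rightarrow> real^'n \<Rightarrow> real \<Rightarrow> (real \<Rightarrow> real^'n) \<Rightarrow> (real \<Rightarrow> real^'m) \<Rightarrow> bool" where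
  "admissible_pair A B E d U x0 T x u \<longleftrightarrow>
     set_integrable lebesgue {0..T} u \<and> (\<forall>t\<in>{0..T}. u t \<in> U) \<and>
     set_integrable lebesgue {0..T} (\<lambda>s. A *v x s + B *v u s + E *v d s) \<and>
     (\<forall>t\<in>{0..T}. x t = x0 + (LINT s:{0..t}|lebesgue. A *v x s + B *v u s + E *v d s))"

definition cost :: "(real \<Rightarrow> real^'n \<Rightarrow> real^'m \<Rightarrow> real) \<Rightarrow> real
   \<Rightarrow> (real \<Rightarrow> real^'n) \<Rightarrow> (real \<Rightarrow> real^'m) \<Rightarrow> real" where
  "cost l T x u = (LINT \<tau>:{0..T}|lebesgue. l \<tau> (x \<tau>) (u \<tau>))"

definition optimal_pair ::
  "real^'n::finite^'n \<Rightarrow> real^'m::finite^'n \<Rightarrow> real^'w::finite^'n \<Rightarrow> (real \<Rightarrow> real^'w)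
   \<Rightarrow> (real^'m) set \<Rightarrow> (real \<Rightarrow> real^'n \<Rightarrow> real^'m \<Rightarrow> real)
   \<Rightarrow> real^'n \<Rightarrow> real \<Rightarrow> (real \<Rightarrow> real^'n) \<Rightarrow> (real \<Rightarrow> real^'m) \<Rightarrow> bool" where
  "optimal_pair A B E d U l x0 T x u \<longleftrightarrow>
     admissible_pair A B E d U x0 T x u \<and>
     (\<forall>x' u'. admissible_pair A B E d U x0 T x' u' \<longrightarrow> cost l T x u \<le> cost l T x' u')"

definition exact_turnpike ::
  "real^'n::finite^'n \<Rightarrow> real^'m::finite^'n \<Rightarrow> real^'w::finite^'n \<Rightarrow> (real \<Rightarrow> real^'w)
   \<Rightarrow> (real^'m) set \<Rightarrow> (real \<Rightarrow> real^'n \<Rightarrow> real^'m \<Rightarrow> real) \<Rightarrow> (real^'n) set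
   \<Rightarrow> (real \<Rightarrow> real^'n) \<Rightarrow> (real \<Rightarrow> real^'m) \<Rightarrow> bool" where
  "exact_turnpike A B E d U l X0 xb ub \<longleftrightarrow>
     (\<exists>\<nu>::real \<Rightarrow> real. (\<forall>\<epsilon>\<ge>0. 0 \<le> \<nu> \<epsilon>) \<and>
        (\<forall>x0\<in>X0. \<forall>T>0. \<forall>x u. optimal_pair A B E d U l x0 T x u \<longrightarrow>
           (\<forall>\<epsilon>\<ge>0. emeasure lebesgue {\<tau>\<in>{0..T}. norm ((x \<tau>, u \<tau>) - (xb \<tau>, ub \<tau>)) > \<epsilon>}
                     \<le> ennreal (\<nu> \<epsilon>))))"

definition class_K :: "(real \<Rightarrow> real) \<Rightarrow> bool" where
  "class_K \<alpha> \<longleftrightarrow> continuous_on {0..} \<alpha> \<and> mono_on {0..} \<alpha> \<and> \<alpha> 0 = 0"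

definition strictly_dissipative ::
  "real^'n::finite^'n \<Rightarrow> real^'m::finite^'n \<Rightarrow> real^'w::finite^'n \<Rightarrow> (real \<Rightarrow> real^'w)
   \<Rightarrow> (real^'m) set \<Rightarrow> (real \<Rightarrow> real^'n \<Rightarrow> real^'m \<Rightarrow> real) \<Rightarrow> (real^'n) set
   \<Rightarrow> (real \<Rightarrow> real^'n) \<Rightarrow> (real \<Rightarrow> real^'m) \<Rightarrow> (real \<Rightarrow> real) \<Rightarrow> bool" where
  "strictly_dissipative A B E d U l X0 xb ub \<alpha> \<longleftrightarrow>
     (\<exists>S::real \<Rightarrow> real^'n \<Rightarrow> real. \<exists>s\<ge>0. (\<forall>t y. s \<le> S t y) \<and>
        (\<forall>x0\<in>X0. \<forall>T\<ge>0. \<forall>x u. optimal_pair A B E d U l x0 T x u \<longrightarrow>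
           S T (x T) - S 0 x0 \<le>
             (LINT \<tau>:{0..T}|lebesgue. - \<alpha> (norm ((x \<tau>, u \<tau>) - (xb \<tau>, ub \<tau>)))
                 + (l \<tau> (x \<tau>) (u \<tau>) - l \<tau> (xb \<tau>) (ub \<tau>)))))"

end

theory Submission
  imports Defs
begin

lemma onestep:
  fixes e :: "real \<Rightarrow> 'a::real_normed_vector"
  assumes cont: "continuous_on {a..b} e" and L: "L \<ge> 0" and W: "W \<ge> 0"
    and P: "\<And>s t M. a \<le> s \<Longrightarrow> s \<le> t \<Longrightarrow> t \<le> b \<Longrightarrow> (\<forall>\<tau>\<in>{s..t}. norm (e \<tau>) \<le> M)
              \<Longrightarrow> norm (e t - e s) \<le> (t - s) * (L * M + W)"
    and h: "h \<ge> 0" "h * L \<le> 1/2"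
    and a': "a \<le> a'" "a' \<le> t" "t \<le> b" "t - a' \<le> h"
  shows "norm (e t) \<le> 2 * norm (e a') + 2 * h * W"
proof -
  have "continuous_on {a'..t} e"
    by (rule continuous_on_subset[OF cont]) (use a' in auto)
  then have "continuous_on {a'..t} (\<lambda>\<tau>. norm (e \<tau>))"
    by (intro continuous_intros)
  then obtain c where c: "c \<in> {a'..t}" and cmax: "\<forall>y\<in>{a'..t}. norm (e y) \<le> norm (e c)"
    using continuous_attains_sup[of "{a'..t}" "\<lambda>\<tau>. norm (e \<tau>)"] a' by auto
  define M where "M = norm (e c)"
  have M0: "M \<ge> 0" by (simp add: M_def)
  have "norm (e c - e a') \<le> (c - a') * (L * M + W)"
    using P[of a' c M] c cmax a' unfolding M_def by auto
  also have "\<dots> \<le> h * (L * M + W)"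
    using c a' L W M0 by (intro mult_right_mono) auto
  also have "\<dots> = (h * L) * M + h * W" by (simp add: algebra_simps)
  also have "\<dots> \<le> M / 2 + h * W" using h M0 mult_right_mono[OF h(2) M0] by simp
  finally have "norm (e c - e a') \<le> M / 2 + h * W" .
  moreover have "norm (e c) \<le> norm (e a') + norm (e c - e a')"
    by (metis add.commute diff_add_cancel norm_triangle_ineq)
  ultimately have "M \<le> 2 * norm (e a') + 2 * h * W" unfolding M_def by linarith
  moreover have "norm (e t) \<le> M" using cmax a' unfolding M_def by auto
  ultimately show ?thesis by linarith
qed

lemma gron_k:
  fixes e :: "real \<Rightarrow> 'a::real_normed_vector"
  assumes cont: "continuous_on {a..b} e" and L: "L \<ge> 0" and W: "W \<ge> 0"
    and P: "\<And>s t M. a \<le> s \<Longrightarrow> s \<le> t \<Longrightarrow> t \<le> b \<Longrightarrow> (\<forall>\<tau>\<in>{s..t}. norm (e \<tau>) \<le> M)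
              \<Longrightarrow> norm (e t - e s) \<le> (t - s) * (L * M + W)"
    and h: "h \<ge> 0" "h * L \<le> 1/2"
  shows "\<forall>t. a \<le> t \<longrightarrow> t \<le> b \<longrightarrow> t \<le> a + real k * h \<longrightarrow>
            norm (e t) \<le> 2^k * (norm (e a) + 2 * h * W) - 2 * h * W"
proof (induction k)
  case 0
  then show ?case by auto
next
  case (Suc k)
  note IH = Suc.IH
  show ?case
  proof (intro allI impI)
    fix t assume t: "a \<le> t" "t \<le> b" "t \<le> a + real (Suc k) * h"
    define X where "X = norm (e a) + 2 * h * W"
    have pos: "0 \<le> X" using h W unfolding X_def by simp
    have pk: "(2::real)^k * X \<le> 2 ^ Suc k * X" using pos by simp
    show "norm (e t) \<le> 2 ^ Suc k * (norm (e a) + 2 * h * W) - 2 * h * W"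
    proof (cases "t \<le> a + real k * h")
      case True
      then have "norm (e t) \<le> 2^k * X - 2 * h * W" using IH t unfolding X_def by blast
      then show ?thesis using pk unfolding X_def by linarith
    next
      case False
      define a' where "a' = a + real k * h"
      have a'1: "a \<le> a'" using h unfolding a'_def by simp
      have a'2: "a' \<le> t" "t - a' \<le> h" using False t unfolding a'_def by (auto simp: algebra_simps)
      have "norm (e t) \<le> 2 * norm (e a') + 2 * h * W"
        by (rule onestep[OF cont L W P h a'1 a'2(1) t(2) a'2(2)])
      moreover have "norm (e a') \<le> 2^k * X - 2 * h * W"
        using IH a'1 a'2 t unfolding a'_def X_def by auto
      ultimately show ?thesis unfolding X_def by (simp add: algebra_simps)
    qed
  qed
qed

lemma adm_props:
  fixes A :: "real^'n::finite^'n" and B :: "real^'m::finite^'n" and E :: "real^'w::finite^'n"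
  assumes adm: "admissible_pair A B E d U x0 T x u"
  shows "(\<lambda>s. A *v x s + B *v u s + E *v d s) integrable_on {0..T}"
    and "\<forall>t\<in>{0..T}. x t = x0 + integral {0..t} (\<lambda>s. A *v x s + B *v u s + E *v d s)"
    and "continuous_on {0..T} x"
    and "u \<in> borel_measurable (lebesgue_on {0..T})"
    and "\<forall>t\<in>{0..T}. u t \<in> U"
proof -
  define F where "F = (\<lambda>s. A *v x s + B *v u s + E *v d s)"
  have iu: "set_integrable lebesgue {0..T} u" and uU: "\<forall>t\<in>{0..T}. u t \<in> U"
    and iF: "set_integrable lebesgue {0..T} F"
    and xeq: "\<forall>t\<in>{0..T}. x t = x0 + (LINT s:{0..t}|lebesgue. F s)"
    using adm unfolding admissible_pair_def F_def by auto
  show Fi: "(\<lambda>s. A *v x s + B *v u s + E *v d s) integrable_on {0..T}"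
    using set_lebesgue_integral_eq_integral(1)[OF iF] unfolding F_def .
  have xeq2: "\<forall>t\<in>{0..T}. x t = x0 + integral {0..t} F"
  proof
    fix t assume t: "t \<in> {0..T}"
    have "set_integrable lebesgue {0..t} F"
      by (rule set_integrable_subset[OF iF]) (use t in auto)
    then show "x t = x0 + integral {0..t} F"
      using xeq t set_lebesgue_integral_eq_integral(2) by metis
  qed
  then show "\<forall>t\<in>{0..T}. x t = x0 + integral {0..t} (\<lambda>s. A *v x s + B *v u s + E *v d s)"
    unfolding F_def .
  have "continuous_on {0..T} (\<lambda>t. x0 + integral {0..t} F)"
    using Fi unfolding F_def[symmetric]
    by (intro continuous_intros indefinite_integral_continuous_1)
  then show "continuous_on {0..T} x"
    using xeq2 continuous_on_cong by (metis (no_types, lifting))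
  show "u \<in> borel_measurable (lebesgue_on {0..T})"
    using set_lebesgue_integral_eq_integral(1)[OF iu] integrable_imp_measurable by blast
  show "\<forall>t\<in>{0..T}. u t \<in> U" by (fact uU)
qed

lemma bad_meas:
  fixes x xb :: "real \<Rightarrow> real^'n::finite" and u ub :: "real \<Rightarrow> real^'m::finite"
  assumes "continuous_on {0..T} x" "continuous_on {0..T} xb"
    "u \<in> borel_measurable (lebesgue_on {0..T})" "ub \<in> borel_measurable (lebesgue_on {0..T})"
  shows "{\<tau>\<in>{0..T}. norm ((x \<tau>, u \<tau>) - (xb \<tau>, ub \<tau>)) > 0} \<in> sets lebesgue"
proof -
  define g where "g = (\<lambda>\<tau>. norm (x \<tau> - xb \<tau>) + norm (u \<tau> - ub \<tau>))"
  have mx: "x \<in> borel_measurable (lebesgue_on {0..T})" "xb \<in> borel_measurable (lebesgue_on {0..T})"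
    using assms(1,2) by (auto intro!: continuous_imp_measurable_on_sets_lebesgue)
  have "g \<in> borel_measurable (lebesgue_on {0..T})"
    unfolding g_def using mx assms(3,4) by measurable
  then have "{w \<in> space (lebesgue_on {0..T}). 0 < g w} \<in> sets (lebesgue_on {0..T})"
    using borel_measurable_iff_greater by blast
  moreover have "{w \<in> space (lebesgue_on {0..T}). 0 < g w} =
      {\<tau>\<in>{0..T}. norm ((x \<tau>, u \<tau>) - (xb \<tau>, ub \<tau>)) > 0}"
  proof -
    have "\<And>a b :: real. 0 \<le> a \<Longrightarrow> 0 \<le> b \<Longrightarrow> 0 < a + b \<longleftrightarrow> a \<noteq> 0 \<or> b \<noteq> 0" by auto
    then show ?thesis unfolding g_def by (auto simp: add_pos_nonneg zero_prod_def)
  qed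
  ultimately have "{\<tau>\<in>{0..T}. norm ((x \<tau>, u \<tau>) - (xb \<tau>, ub \<tau>)) > 0} \<in> sets (lebesgue_on {0..T})"
    by metis
  then show ?thesis
    by (subst (asm) sets_restrict_space_iff) auto
qed


lemma diff_P:
  fixes A :: "real^'n::finite^'n" and B :: "real^'m::finite^'n" and E :: "real^'w::finite^'n"
  assumes adm: "admissible_pair A B E d U x0 T x u"
    and admb: "admissible_pair A B E d U y0 T xb ub"
    and hA: "\<forall>v. norm (A *v v) \<le> norm v * LA" and LA: "LA \<ge> 0"
    and hW: "\<forall>t\<in>{0..T}. norm (B *v (u t - ub t)) \<le> W"
    and st: "0 \<le> s" "s \<le> t" "t \<le> T"
    and M: "\<forall>\<tau>\<in>{s..t}. norm (x \<tau> - xb \<tau>) \<le> M"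
  shows "norm ((x t - xb t) - (x s - xb s)) \<le> (t - s) * (LA * M + W)"
proof -
  define F where "F = (\<lambda>s. A *v x s + B *v u s + E *v d s)"
  define Fb where "Fb = (\<lambda>s. A *v xb s + B *v ub s + E *v d s)"
  note P = adm_props[OF adm, folded F_def] and Pb = adm_props[OF admb, folded Fb_def]
  have iF: "F integrable_on {0..t}" "Fb integrable_on {0..t}"
    using P(1) Pb(1) st by (auto intro: integrable_subinterval_real)
  have iF2: "F integrable_on {s..t}" "Fb integrable_on {s..t}"
    using P(1) Pb(1) st by (auto intro: integrable_subinterval_real)
  have xt: "x t = x0 + integral {0..t} F" and xs: "x s = x0 + integral {0..s} F"
    using bspec[OF P(2), of t] bspec[OF P(2), of s] st by auto
  have c: "integral {0..s} F + integral {s..t} F = integral {0..t} F"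
    by (rule Henstock_Kurzweil_Integration.integral_combine[OF st(1,2) iF(1)])
  have xbt: "xb t = y0 + integral {0..t} Fb" and xbs: "xb s = y0 + integral {0..s} Fb"
    using bspec[OF Pb(2), of t] bspec[OF Pb(2), of s] st by auto
  have cb: "integral {0..s} Fb + integral {s..t} Fb = integral {0..t} Fb"
    by (rule Henstock_Kurzweil_Integration.integral_combine[OF st(1,2) iF(2)])
  have d1: "x t - x s = integral {s..t} F"
    unfolding xt xs c[symmetric] by simp
  have d2: "xb t - xb s = integral {s..t} Fb"
    unfolding xbt xbs cb[symmetric] by simp
  have eq: "(x t - xb t) - (x s - xb s) = integral {s..t} (\<lambda>\<tau>. F \<tau> - Fb \<tau>)"
  proof -
    have "(x t - xb t) - (x s - xb s) = (x t - x s) - (xb t - xb s)" by (simp add: algebra_simps)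
    with d1 d2 show ?thesis unfolding integral_diff[OF iF2] by simp
  qed
  have M0: "0 \<le> M" using M st by (meson atLeastAtMost_iff norm_ge_zero order.trans order_refl)
  have bnd: "norm (F \<tau> - Fb \<tau>) \<le> LA * M + W" if "\<tau> \<in> {s..t}" for \<tau>
  proof -
    have "F \<tau> - Fb \<tau> = A *v (x \<tau> - xb \<tau>) + B *v (u \<tau> - ub \<tau>)"
      unfolding F_def Fb_def by (simp add: matrix_vector_mult_diff_distrib algebra_simps)
    then have "norm (F \<tau> - Fb \<tau>) \<le> norm (A *v (x \<tau> - xb \<tau>)) + norm (B *v (u \<tau> - ub \<tau>))"
      by (metis norm_triangle_ineq)
    also have "\<dots> \<le> norm (x \<tau> - xb \<tau>) * LA + W" using hA hW that st by (intro add_mono) auto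
    also have "\<dots> \<le> M * LA + W" using M that LA by (intro add_mono mult_right_mono) auto
    finally show ?thesis by (simp add: algebra_simps)
  qed
  have "((\<lambda>\<tau>. F \<tau> - Fb \<tau>) has_integral integral {s..t} (\<lambda>\<tau>. F \<tau> - Fb \<tau>)) {s..t}"
    using iF2 by (intro integrable_integral integrable_diff)
  note hi = this
  have W0: "0 \<le> W" using order_trans[OF norm_ge_zero hW[rule_format, of s]] st by auto
  have "norm (integral {s..t} (\<lambda>\<tau>. F \<tau> - Fb \<tau>)) \<le> (LA * M + W) * Henstock_Kurzweil_Integration.content {s..t}"
    by (rule has_integral_bound_real[OF _ _ hi, of "LA * M + W" "{}"]) (use bnd M0 LA W0 in auto)
  moreover have "Henstock_Kurzweil_Integration.content {s..t} = t - s" using st by simp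
  ultimately show ?thesis unfolding eq by (simp add: mult.commute)
qed


lemma diff_bound:
  fixes A :: "real^'n::finite^'n" and B :: "real^'m::finite^'n" and E :: "real^'w::finite^'n"
  assumes adm: "admissible_pair A B E d U x0 T x u"
    and admb: "admissible_pair A B E d U y0 T xb ub"
    and hA: "\<forall>v. norm (A *v v) \<le> norm v * LA" and LA: "LA \<ge> 0"
    and hW: "\<forall>t\<in>{0..T}. norm (B *v (u t - ub t)) \<le> W" and W: "W \<ge> 0"
    and N: "N \<ge> 0"
    and meas: "emeasure lebesgue {\<tau>\<in>{0..T}. norm ((x \<tau>, u \<tau>) - (xb \<tau>, ub \<tau>)) > 0} \<le> ennreal N"
    and e0: "norm (x0 - y0) \<le> \<beta>"
    and t: "t \<in> {0..T}"
  shows "norm (x t - xb t) \<le> 2^(nat \<lceil>N * (2*LA+2)\<rceil>) * (\<beta> + W)"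
proof -
  note P = adm_props[OF adm] and Pb = adm_props[OF admb]
  define bad where "bad = {\<tau>\<in>{0..T}. norm ((x \<tau>, u \<tau>) - (xb \<tau>, ub \<tau>)) > 0}"
  have bad_sets: "bad \<in> sets lebesgue"
    unfolding bad_def by (rule bad_meas[OF P(3) Pb(3) P(4) Pb(4)])
  define e where "e = (\<lambda>\<tau>. x \<tau> - xb \<tau>)"
  have econt: "continuous_on {0..T} e"
    unfolding e_def using P(3) Pb(3) by (intro continuous_intros)
  have econt_t: "continuous_on {0..t} e"
    by (rule continuous_on_subset[OF econt]) (use t in auto)
  define G where "G = {\<tau>\<in>{0..t}. e \<tau> = 0}"
  have Gclosed: "closed G"
    unfolding G_def by (rule continuous_closed_preimage_constant[OF econt_t]) simp
  have beta0: "0 \<le> \<beta>" using e0 norm_ge_zero order_trans by blast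
  have x00: "x 0 = x0" using bspec[OF P(2), of 0] t by simp
  have xb00: "xb 0 = y0" using bspec[OF Pb(2), of 0] t by simp
  define a where "a = (if G = {} then 0 else Sup G)"
  have a_props: "0 \<le> a \<and> a \<le> t \<and> norm (e a) \<le> \<beta> \<and> (\<forall>\<tau>. a < \<tau> \<longrightarrow> \<tau> \<le> t \<longrightarrow> \<tau> \<in> bad)"
  proof (cases "G = {}")
    case True
    have "\<tau> \<in> bad" if "0 < \<tau>" "\<tau> \<le> t" for \<tau>
    proof -
      have "e \<tau> \<noteq> 0" using True that unfolding G_def by auto
      then have "x \<tau> \<noteq> xb \<tau>" unfolding e_def by simp
      then show ?thesis using that t unfolding bad_def by (auto simp: zero_prod_def)
    qed
    then show ?thesis using True t e0 x00 xb00 unfolding a_def e_def by auto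
  next
    case False
    have bdd: "bdd_above G" unfolding G_def by (rule bdd_aboveI[of _ t]) auto
    have SG: "Sup G \<in> G" by (rule closed_contains_Sup[OF False bdd Gclosed])
    have "\<tau> \<in> bad" if "Sup G < \<tau>" "\<tau> \<le> t" for \<tau>
    proof -
      have "\<tau> \<notin> G" using cSup_upper[OF _ bdd, of \<tau>] that by auto
      moreover have "0 \<le> \<tau>" using SG that unfolding G_def by auto
      ultimately have "e \<tau> \<noteq> 0" using that unfolding G_def by auto
      then have "x \<tau> \<noteq> xb \<tau>" unfolding e_def by simp
      then show ?thesis using that t \<open>0 \<le> \<tau>\<close> unfolding bad_def by (auto simp: zero_prod_def)
    qed
    then show ?thesis using False SG beta0 unfolding a_def G_def by auto
  qed
  have a0: "0 \<le> a" and at: "a \<le> t" and ea: "norm (e a) \<le> \<beta>"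
    and abad: "{a<..t} \<subseteq> bad" using a_props by auto
  have "emeasure lebesgue {a<..t} = ennreal (t - a)"
    using at by simp
  moreover have "emeasure lebesgue {a<..t} \<le> emeasure lebesgue bad"
    by (rule emeasure_mono[OF abad bad_sets])
  ultimately have "ennreal (t - a) \<le> ennreal N" using meas unfolding bad_def by simp
  then have taN: "t - a \<le> N" using N by simp
  define h where "h = 1 / (2 * LA + 2)"
  define k where "k = nat \<lceil>N * (2*LA+2)\<rceil>"
  have h0: "h \<ge> 0" and hL: "h * LA \<le> 1/2" and h2: "2 * h \<le> 1"
    using LA unfolding h_def by (auto simp: field_simps)
  have "real k \<ge> N * (2*LA+2)" unfolding k_def by linarith
  then have "real k * h \<ge> N" using LA unfolding h_def by (simp add: field_simps)
  then have tk: "t \<le> a + real k * h" using taN by linarith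
  have econt_a: "continuous_on {a..t} e"
    by (rule continuous_on_subset[OF econt]) (use t a0 in auto)
  have PP: "norm (e t' - e s) \<le> (t' - s) * (LA * M + W)"
    if "a \<le> s" "s \<le> t'" "t' \<le> t" "\<forall>\<tau>\<in>{s..t'}. norm (e \<tau>) \<le> M" for s t' M
  proof -
    have "0 \<le> s" "t' \<le> T" using that a0 t by auto
    from diff_P[OF adm admb hA LA hW this(1) that(2) this(2)] that(4)
    show ?thesis unfolding e_def by blast
  qed
  have "norm (e t) \<le> 2^k * (norm (e a) + 2 * h * W) - 2 * h * W"
    using gron_k[OF econt_a LA W PP h0 hL, of k] at tk by blast
  also have "\<dots> \<le> 2^k * (\<beta> + W)"
  proof -
    have "2 * h * W \<le> 1 * W" using mult_right_mono[OF h2 W] by simp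
    then have "norm (e a) + 2 * h * W \<le> \<beta> + W" using ea by linarith
    then have "2^k * (norm (e a) + 2 * h * W) \<le> 2^k * (\<beta> + W)" by simp
    moreover have "0 \<le> 2 * h * W" using h0 W by simp
    ultimately show ?thesis by linarith
  qed
  finally show ?thesis unfolding e_def k_def .
qed


lemma inner_bound:
  fixes a b :: "'a::real_inner"
  assumes "norm a \<le> R1" "norm b \<le> R2"
  shows "\<bar>a \<bullet> b\<bar> \<le> R1 * R2"
proof -
  have "\<bar>a \<bullet> b\<bar> \<le> norm a * norm b" by (rule Cauchy_Schwarz_ineq2)
  also have "\<dots> \<le> R1 * R2"
    using assms by (intro mult_mono) (auto intro: order_trans[OF norm_ge_zero])
  finally show ?thesis .
qed

lemma stage_bound:
  fixes Q :: "real^'n::finite^'n" and S :: "real^'n^'m::finite"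
    and r :: "real \<Rightarrow> real^'n" and p :: "real \<Rightarrow> real^'m"
  assumes rb: "bounded (r ` {0..})" and pb: "bounded (p ` {0..})" and R: "R \<ge> 0"
  shows "\<exists>K\<ge>0. \<forall>\<tau>\<ge>0. \<forall>x u. norm x \<le> R \<longrightarrow> norm u \<le> R \<longrightarrow> \<bar>stage_cost Q S r p \<tau> x u\<bar> \<le> K"
proof -
  obtain LQ where LQ: "LQ \<ge> 0" "\<forall>v. norm (Q *v v) \<le> norm v * LQ"
    using bounded_linear.nonneg_bounded[OF matrix_vector_mul_bounded_linear[of Q]] by blast
  obtain LS where LS: "LS \<ge> 0" "\<forall>v. norm (S *v v) \<le> norm v * LS"
    using bounded_linear.nonneg_bounded[OF matrix_vector_mul_bounded_linear[of S]] by blast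
  obtain Rr where Rr: "\<forall>\<tau>\<ge>0. norm (r \<tau>) \<le> Rr" using rb unfolding bounded_iff by auto
  obtain Rp where Rp: "\<forall>\<tau>\<ge>0. norm (p \<tau>) \<le> Rp" using pb unfolding bounded_iff by auto
  have Rr0: "Rr \<ge> 0" using order_trans[OF norm_ge_zero Rr[rule_format, of 0]] by simp
  have Rp0: "Rp \<ge> 0" using order_trans[OF norm_ge_zero Rp[rule_format, of 0]] by simp
  define K where "K = (1/2) * (R * (R * LQ)) + R * (R * LS) + R * Rr + R * Rp"
  have K0: "K \<ge> 0" unfolding K_def using R LQ LS Rr0 Rp0 by simp
  have "\<bar>stage_cost Q S r p \<tau> x u\<bar> \<le> K" if \<tau>: "\<tau> \<ge> 0" and x: "norm x \<le> R" and u: "norm u \<le> R" for \<tau> x u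
  proof -
    have nQ: "norm (Q *v x) \<le> R * LQ"
      using order_trans[OF LQ(2)[rule_format, of x] mult_right_mono[OF x LQ(1)]] .
    have nS: "norm (S *v x) \<le> R * LS"
      using order_trans[OF LS(2)[rule_format, of x] mult_right_mono[OF x LS(1)]] .
    have i1: "\<bar>x \<bullet> (Q *v x)\<bar> \<le> R * (R * LQ)" by (rule inner_bound[OF x nQ])
    have i2: "\<bar>u \<bullet> (S *v x)\<bar> \<le> R * (R * LS)" by (rule inner_bound[OF u nS])
    have i3: "\<bar>x \<bullet> r \<tau>\<bar> \<le> R * Rr" by (rule inner_bound[OF x]) (use Rr \<tau> in auto)
    have i4: "\<bar>u \<bullet> p \<tau>\<bar> \<le> R * Rp" by (rule inner_bound[OF u]) (use Rp \<tau> in auto)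
    show ?thesis unfolding stage_cost_def K_def using i1 i2 i3 i4 by linarith
  qed
  then show ?thesis using K0 by blast
qed

theorem proposition3:
  fixes q :: "'n::finite \<Rightarrow> 'n \<Rightarrow> real"
    and \<kappa> :: "'n \<Rightarrow> real"
    and prod :: "'m::finite \<Rightarrow> 'n"
    and cons :: "'w::finite \<Rightarrow> 'n"
    and umin umax :: "real^'m"
    and Q :: "real^'n^'n" and S :: "real^'n^'m"
    and r :: "real \<Rightarrow> real^'n" and p :: "real \<Rightarrow> real^'m"
    and d :: "real \<Rightarrow> real^'w"
    and X0 :: "(real^'n) set"
    and xb :: "real \<Rightarrow> real^'n" and ub :: "real \<Rightarrow> real^'m"
  assumes n_ge2: "CARD('n) \<ge> 2"
    and q_nonneg: "\<forall>u v. 0 \<le> q u v"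
    and q_noloop: "\<forall>v. q v v = 0"
    and connected: "\<forall>u v. (u, v) \<in> (flow_edges q \<union> (flow_edges q)\<inverse>)\<^sup>*"
    and kappa_pos: "\<forall>v. 0 < \<kappa> v"
    and prod_inj: "inj prod" and cons_inj: "inj cons"
    and prod_cons_disj: "range prod \<inter> range cons = {}"
    and box: "\<forall>i. 0 \<le> umin $ i \<and> umin $ i \<le> umax $ i"
    and Q_sym: "transpose Q = Q"
    and X0_compact: "compact X0"
    and d_meas: "d \<in> borel_measurable lebesgue" and d_bdd: "bounded (d ` {0..})"
    and r_meas: "r \<in> borel_measurable lebesgue" and r_bdd: "bounded (r ` {0..})"
    and p_meas: "p \<in> borel_measurable lebesgue" and p_bdd: "bounded (p ` {0..})"
    and zb_traj: "\<forall>T\<ge>0. admissible_pair (sys_matrix q \<kappa>) (selection_matrix prod)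
                     (selection_matrix cons) d (cbox umin umax) (xb 0) T xb ub"
    and zb_int: "\<forall>t\<ge>0. ub t \<in> interior (cbox umin umax)"
    and turnpike: "exact_turnpike (sys_matrix q \<kappa>) (selection_matrix prod) (selection_matrix cons)
                     d (cbox umin umax) (stage_cost Q S r p) X0 xb ub"
    and zb_bdd: "bounded ((\<lambda>t. (xb t, ub t)) ` {0..})"
  shows "\<forall>\<alpha>. class_K \<alpha> \<longrightarrow>
           strictly_dissipative (sys_matrix q \<kappa>) (selection_matrix prod) (selection_matrix cons)
             d (cbox umin umax) (stage_cost Q S r p) X0 xb ub \<alpha>"
proof (intro allI impI)
  fix \<alpha> :: "real \<Rightarrow> real"
  assume aK: "class_K \<alpha>"
  let ?A = "sys_matrix q \<kappa>" and ?B = "selection_matrix prod" and ?E = "selection_matrix cons"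
  let ?U = "cbox umin umax" and ?l = "stage_cost Q S r p"
  have amono: "mono_on {0..} \<alpha>" and a0: "\<alpha> 0 = 0" using aK unfolding class_K_def by auto
  obtain \<nu> :: "real \<Rightarrow> real" where nu0: "\<forall>\<epsilon>\<ge>0. 0 \<le> \<nu> \<epsilon>"
    and nuT: "\<forall>x0\<in>X0. \<forall>T>0. \<forall>x u. optimal_pair ?A ?B ?E d ?U ?l x0 T x u \<longrightarrow>
           (\<forall>\<epsilon>\<ge>0. emeasure lebesgue {\<tau>\<in>{0..T}. norm ((x \<tau>, u \<tau>) - (xb \<tau>, ub \<tau>)) > \<epsilon>}
                     \<le> ennreal (\<nu> \<epsilon>))"
    using turnpike unfolding exact_turnpike_def by blast
  define N where "N = \<nu> 0"
  have N0: "N \<ge> 0" using nu0 unfolding N_def by simp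
  obtain LA where LA: "LA \<ge> 0" "\<forall>v. norm (?A *v v) \<le> norm v * LA"
    using bounded_linear.nonneg_bounded[OF matrix_vector_mul_bounded_linear[of ?A]] by blast
  obtain LB where LB: "LB \<ge> 0" "\<forall>v. norm (?B *v v) \<le> norm v * LB"
    using bounded_linear.nonneg_bounded[OF matrix_vector_mul_bounded_linear[of ?B]] by blast
  obtain MU0 where MU0: "\<forall>v\<in>?U. norm v \<le> MU0"
    using bounded_cbox[of umin umax] unfolding bounded_iff by blast
  define MU where "MU = max MU0 0"
  have MU: "\<forall>v\<in>?U. norm v \<le> MU" "MU \<ge> 0" using MU0 unfolding MU_def by force+
  obtain Mb0 where Mb0: "\<forall>z\<in>(\<lambda>t. (xb t, ub t)) ` {0..}. norm z \<le> Mb0"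
    using zb_bdd unfolding bounded_iff by blast
  define Mb where "Mb = max Mb0 0"
  have Mb: "\<forall>t\<ge>0. norm (xb t) \<le> Mb \<and> norm (ub t) \<le> Mb" "Mb \<ge> 0"
  proof -
    show "\<forall>t\<ge>0. norm (xb t) \<le> Mb \<and> norm (ub t) \<le> Mb"
    proof (intro allI impI)
      fix t :: real assume "t \<ge> 0"
      then have "norm (xb t, ub t) \<le> Mb0" using Mb0 by auto
      then show "norm (xb t) \<le> Mb \<and> norm (ub t) \<le> Mb"
        unfolding Mb_def using norm_fst_le[of "xb t" "ub t"] norm_snd_le[of "ub t" "xb t"] by linarith
    qed
    show "Mb \<ge> 0" unfolding Mb_def by simp
  qed
  obtain M00 where M00: "\<forall>y\<in>X0. norm y \<le> M00"
    using compact_imp_bounded[OF X0_compact] unfolding bounded_iff by blast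
  define M0 where "M0 = max M00 0"
  have M0: "\<forall>y\<in>X0. norm y \<le> M0" "M0 \<ge> 0" using M00 unfolding M0_def by force+
  define W where "W = 2 * MU * LB"
  have W0: "W \<ge> 0" unfolding W_def using MU LB by simp
  have hW: "norm (?B *v (v - w)) \<le> W" if "v \<in> ?U" "w \<in> ?U" for v w
  proof -
    have "norm (?B *v (v - w)) \<le> norm (v - w) * LB" using LB by blast
    also have "\<dots> \<le> (2 * MU) * LB"
    proof (rule mult_right_mono[OF _ LB(1)])
      have "norm (v - w) \<le> norm v + norm w" by (rule norm_triangle_ineq4)
      moreover have "norm v \<le> MU" "norm w \<le> MU" using MU(1) that by blast+
      ultimately show "norm (v - w) \<le> 2 * MU" by linarith
    qed
    finally show ?thesis unfolding W_def by simp
  qed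
  define Be where "Be = 2^(nat \<lceil>N * (2*LA+2)\<rceil>) * ((M0 + Mb) + W)"
  have Be0: "Be \<ge> 0" unfolding Be_def using M0 Mb W0 by simp
  define R where "R = Be + Mb + MU"
  have R0: "R \<ge> 0" unfolding R_def using Be0 Mb MU by simp
  obtain K where K0: "K \<ge> 0" and K: "\<forall>\<tau>\<ge>0. \<forall>x u. norm x \<le> R \<longrightarrow> norm u \<le> R \<longrightarrow> \<bar>?l \<tau> x u\<bar> \<le> K"
    using stage_bound[OF r_bdd p_bdd R0, of Q S] by blast
  define Kf where "Kf = \<alpha> (4 * R) + 2 * K"
  have aR: "\<alpha> (4 * R) \<ge> 0" using mono_onD[OF amono, of 0 "4 * R"] R0 a0 by simp
  have Kf0: "Kf \<ge> 0" unfolding Kf_def using aR K0 by simp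
  define C where "C = Kf * N"
  have C0: "C \<ge> 0" unfolding C_def using Kf0 N0 by simp
  show "strictly_dissipative ?A ?B ?E d ?U ?l X0 xb ub \<alpha>"
    unfolding strictly_dissipative_def
  proof (intro exI[of _ "\<lambda>t (y::real^'n). if t = 0 then C else 0"] exI[of _ 0] conjI allI impI ballI)
    show "(0::real) \<le> 0" by simp
    fix t :: real and y :: "real^'n"
    show "0 \<le> (if t = 0 then C else 0)" using C0 by simp
  next
    fix x0 T x u
    assume x0: "x0 \<in> X0" and T: "0 \<le> T" and opt: "optimal_pair ?A ?B ?E d ?U ?l x0 T x u"
    define f where "f = (\<lambda>\<tau>. - \<alpha> (norm ((x \<tau>, u \<tau>) - (xb \<tau>, ub \<tau>)))
                 + (?l \<tau> (x \<tau>) (u \<tau>) - ?l \<tau> (xb \<tau>) (ub \<tau>)))"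
    have goal: "(if T = 0 then C else 0) - C \<le> set_lebesgue_integral lebesgue {0..T} f"
    proof (cases "set_integrable lebesgue {0..T} f")
      case False
      then have "set_lebesgue_integral lebesgue {0..T} f = 0"
        by (simp add: set_lebesgue_integral_def set_integrable_def not_integrable_integral_eq)
      then show ?thesis using C0 by simp
    next
      case True
      have fi: "f integrable_on {0..T}" and feq: "set_lebesgue_integral lebesgue {0..T} f = integral {0..T} f"
        using set_lebesgue_integral_eq_integral[OF True] by auto
      show ?thesis
      proof (cases "T = 0")
        case True
        then show ?thesis using feq by simp
      next
        case False
        then have Tpos: "T > 0" using T by simp
        have adm: "admissible_pair ?A ?B ?E d ?U x0 T x u" using opt unfolding optimal_pair_def by blast
        have admb: "admissible_pair ?A ?B ?E d ?U (xb 0) T xb ub" using zb_traj T by blast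
        note P = adm_props[OF adm] and Pb = adm_props[OF admb]
        define bad where "bad = {\<tau>\<in>{0..T}. norm ((x \<tau>, u \<tau>) - (xb \<tau>, ub \<tau>)) > 0}"
        have bad_sets: "bad \<in> sets lebesgue"
          unfolding bad_def by (rule bad_meas[OF P(3) Pb(3) P(4) Pb(4)])
        have meas: "emeasure lebesgue bad \<le> ennreal N"
          using nuT[rule_format, OF x0 Tpos opt, of 0] unfolding bad_def N_def by simp
        have bad_sub: "bad \<subseteq> {0..T}" unfolding bad_def by auto
        have bad_lm: "bad \<in> lmeasurable"
          by (rule bounded_set_imp_lmeasurable[OF bounded_subset[OF bounded_closed_interval bad_sub] bad_sets])
        have mbad: "measure lebesgue bad \<le> N"
        proof -
          have "enn2real (emeasure lebesgue bad) \<le> enn2real (ennreal N)"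
            by (rule enn2real_mono[OF meas]) simp
          then show ?thesis using N0 unfolding measure_def by simp
        qed
        have hWt: "\<forall>t\<in>{0..T}. norm (?B *v (u t - ub t)) \<le> W"
          using hW P(5) Pb(5) by blast
        have e0: "norm (x0 - xb 0) \<le> M0 + Mb"
        proof -
          have "norm (x0 - xb 0) \<le> norm x0 + norm (xb 0)" by (rule norm_triangle_ineq4)
          then show ?thesis using M0 Mb x0 by fastforce
        qed
        have ebound: "norm (x t - xb t) \<le> Be" if "t \<in> {0..T}" for t
          using diff_bound[OF adm admb LA(2) LA(1) hWt W0 N0 meas[unfolded bad_def] e0 that]
          unfolding Be_def .
        define g where "g = (\<lambda>\<tau>. (- Kf) *\<^sub>R indicat_real bad \<tau>)"
        have ind_int: "indicat_real bad integrable_on {0..T}"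
          unfolding integrable_on_indicator using bad_lm bad_sub by (simp add: Int_absorb2)
        have gi: "g integrable_on {0..T}" unfolding g_def by (rule integrable_cmul[OF ind_int])
        have gint: "integral {0..T} g = - Kf * measure lebesgue bad"
          unfolding g_def integral_cmul using integral_indicator[of bad "{0..T}"] bad_lm bad_sub
          by (simp add: Int_absorb2)
        have gf: "g \<tau> \<le> f \<tau>" if \<tau>: "\<tau> \<in> {0..T}" for \<tau>
        proof (cases "\<tau> \<in> bad")
          case True
          have t0: "\<tau> \<ge> 0" using \<tau> by simp
          have nx: "norm (x \<tau>) \<le> R"
          proof -
            have "norm (x \<tau>) \<le> norm (x \<tau> - xb \<tau>) + norm (xb \<tau>)"
              using norm_triangle_sub[of "x \<tau>" "xb \<tau>"] by simp
            then show ?thesis using ebound[OF \<tau>] Mb t0 MU unfolding R_def by fastforce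
          qed
          have nu: "norm (u \<tau>) \<le> R" using MU P(5) \<tau> Be0 Mb unfolding R_def by fastforce
          have nxb: "norm (xb \<tau>) \<le> R" and nub: "norm (ub \<tau>) \<le> R"
            using Mb t0 Be0 MU unfolding R_def by fastforce+
          have l1: "\<bar>?l \<tau> (x \<tau>) (u \<tau>)\<bar> \<le> K" using K t0 nx nu by blast
          have l2: "\<bar>?l \<tau> (xb \<tau>) (ub \<tau>)\<bar> \<le> K" using K t0 nxb nub by blast
          define D where "D = norm ((x \<tau>, u \<tau>) - (xb \<tau>, ub \<tau>))"
          have "D \<le> norm (x \<tau>, u \<tau>) + norm (xb \<tau>, ub \<tau>)"
            unfolding D_def by (rule norm_triangle_ineq4)
          also have "\<dots> \<le> (norm (x \<tau>) + norm (u \<tau>)) + (norm (xb \<tau>) + norm (ub \<tau>))"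
            by (intro add_mono norm_Pair_le)
          finally have D4: "D \<le> 4 * R" using nx nu nxb nub by linarith
          have "\<alpha> D \<le> \<alpha> (4 * R)" using mono_onD[OF amono, of D "4 * R"] D4 R0 unfolding D_def by simp
          then have "f \<tau> \<ge> - Kf" unfolding f_def Kf_def D_def[symmetric] using l1 l2 by linarith
          then show ?thesis unfolding g_def using True by simp
        next
          case False
          then have "\<not> norm ((x \<tau>, u \<tau>) - (xb \<tau>, ub \<tau>)) > 0" using \<tau> unfolding bad_def by blast
          then have "(x \<tau>, u \<tau>) - (xb \<tau>, ub \<tau>) = 0" by simp
          then have "x \<tau> = xb \<tau>" "u \<tau> = ub \<tau>" by (simp_all add: zero_prod_def)
          then have "f \<tau> = 0" unfolding f_def using a0 by simp
          then show ?thesis unfolding g_def using False by simp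
        qed
        have "integral {0..T} g \<le> integral {0..T} f" by (rule integral_le[OF gi fi gf])
        moreover have "- Kf * measure lebesgue bad \<ge> - C"
          unfolding C_def using mult_left_mono[OF mbad Kf0] by simp
        ultimately show ?thesis using feq gint False by simp
      qed
    qed
    then show "(if T = 0 then C else 0) - (if (0::real) = 0 then C else 0)
       \<le> (LINT \<tau>:{0..T}|lebesgue. - \<alpha> (norm ((x \<tau>, u \<tau>) - (xb \<tau>, ub \<tau>)))
                 + (?l \<tau> (x \<tau>) (u \<tau>) - ?l \<tau> (xb \<tau>) (ub \<tau>)))"
      unfolding f_def by simp
  qed
qed

end
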